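(* Let $U$ be a finite-dimensional complex vector space with basis $\mathbb B$, $w:U\to U$ linear, $\xi:\mathbb B\to\mathbb B$ a bijection and $\le$ a preorder on $\mathbb B$ such that $w$ acts on $(U,\mathbb B,\le)$ by $\xi$ up to lower-order terms. Let $\preceq$ be a linearisation of $\le$ (a total order on $\mathbb B$ with $x\prec y$ whenever $x<y$), and let $[w]_{(\mathbb B,\preceq)}$ be the matrix of $w$ in the ordered basis $(\mathbb B,\preceq)$. Then $[w]_{(\mathbb B,\preceq)}$ has a unique QR decomposition $QR$ (with $Q$ orthogonal and $R$ upper triangular with positive diagonal entries), and $Q$ is a generalised permutation matrix for $\xi$.
   Context: $w$ acts on $(U,\mathbb B,\le)$ by $\xi$ up to lower-order terms if for every $x\in\mathbb B$ there are integers $a_y$ with $w(x)=\pm\xi(x)+\sum_{y<x}a_y\xi(y)$, the sign depending only on the equivalence class of $x$ under the equivalence relation induced by $\le$. A generalised permutation matrix for $\xi$ is a matrix whose only nonzero entries are $\pm1$ in the positions $(\xi(x),x)$, $x\in\mathbb B$. *)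

theory Defs
  imports Main "Jordan_Normal_Form.Matrix"
begin

definition strict_of :: "('u \<Rightarrow> 'u \<Rightarrow> bool) \<Rightarrow> 'u \<Rightarrow> 'u \<Rightarrow> bool" where
  "strict_of leq x y \<longleftrightarrow> leq x y \<and> \<not> leq y x"

definition equiv_of :: "('u \<Rightarrow> 'u \<Rightarrow> bool) \<Rightarrow> 'u \<Rightarrow> 'u \<Rightarrow> bool" where
  "equiv_of leq x y \<longleftrightarrow> leq x y \<and> leq y x"

definition preorder_on :: "'u set \<Rightarrow> ('u \<Rightarrow> 'u \<Rightarrow> bool) \<Rightarrow> bool" where
  "preorder_on B leq \<longleftrightarrow> (\<forall>x\<in>B. leq x x) \<and>
     (\<forall>x\<in>B. \<forall>y\<in>B. \<forall>z\<in>B. leq x y \<longrightarrow> leq y z \<longrightarrow> leq x z)"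

definition total_order_on :: "'u set \<Rightarrow> ('u \<Rightarrow> 'u \<Rightarrow> bool) \<Rightarrow> bool" where
  "total_order_on B lin \<longleftrightarrow> preorder_on B lin \<and>
     (\<forall>x\<in>B. \<forall>y\<in>B. lin x y \<longrightarrow> lin y x \<longrightarrow> x = y) \<and>
     (\<forall>x\<in>B. \<forall>y\<in>B. lin x y \<or> lin y x)"

definition linearisation_of :: "'u set \<Rightarrow> ('u \<Rightarrow> 'u \<Rightarrow> bool) \<Rightarrow> ('u \<Rightarrow> 'u \<Rightarrow> bool) \<Rightarrow> bool" where
  "linearisation_of B leq lin \<longleftrightarrow> total_order_on B lin \<and>
     (\<forall>x\<in>B. \<forall>y\<in>B. strict_of leq x y \<longrightarrow> lin x y \<and> x \<noteq> y)"

definition acts_up_to_lower :: "(complex \<Rightarrow> 'u::ab_group_add \<Rightarrow> 'u) \<Rightarrow> 'u set \<Rightarrow> ('u \<Rightarrow> 'u \<Rightarrow> bool)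
    \<Rightarrow> ('u \<Rightarrow> 'u) \<Rightarrow> ('u \<Rightarrow> 'u) \<Rightarrow> bool" where
  "acts_up_to_lower scale B leq w \<xi> \<longleftrightarrow>
     (\<exists>\<sigma> :: 'u \<Rightarrow> int.
        (\<forall>x\<in>B. \<sigma> x = 1 \<or> \<sigma> x = -1) \<and>
        (\<forall>x\<in>B. \<forall>y\<in>B. equiv_of leq x y \<longrightarrow> \<sigma> x = \<sigma> y) \<and>
        (\<forall>x\<in>B. \<exists>a :: 'u \<Rightarrow> int.
           w x = scale (of_int (\<sigma> x)) (\<xi> x) +
                 (\<Sum>y\<in>{y\<in>B. strict_of leq y x}. scale (of_int (a y)) (\<xi> y))))"

text \<open>The i-th element (counting from 0) of B in the total order lin.\<close>
definition ord_elem :: "'u set \<Rightarrow> ('u \<Rightarrow> 'u \<Rightarrow> bool) \<Rightarrow> nat \<Rightarrow> 'u" where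
  "ord_elem B lin i = (THE x. x \<in> B \<and> card {y\<in>B. lin y x \<and> y \<noteq> x} = i)"

definition matrix_wrt :: "(complex \<Rightarrow> 'u::ab_group_add \<Rightarrow> 'u) \<Rightarrow> 'u set \<Rightarrow> ('u \<Rightarrow> 'u \<Rightarrow> bool)
    \<Rightarrow> ('u \<Rightarrow> 'u) \<Rightarrow> complex mat" where
  "matrix_wrt scale B lin w = mat (card B) (card B)
     (\<lambda>(i,j). module.representation scale B (w (ord_elem B lin j)) (ord_elem B lin i))"

definition is_QR :: "complex mat \<Rightarrow> real mat \<Rightarrow> real mat \<Rightarrow> bool" where
  "is_QR M Q R \<longleftrightarrow> (let n = dim_row M in
     M \<in> carrier_mat n n \<and> Q \<in> carrier_mat n n \<and> R \<in> carrier_mat n n \<and>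
     transpose_mat Q * Q = 1\<^sub>m n \<and> upper_triangular R \<and> (\<forall>i<n. R $$ (i,i) > 0) \<and>
     M = map_mat complex_of_real (Q * R))"

definition gen_perm_for :: "'u set \<Rightarrow> ('u \<Rightarrow> 'u \<Rightarrow> bool) \<Rightarrow> ('u \<Rightarrow> 'u) \<Rightarrow> real mat \<Rightarrow> bool" where
  "gen_perm_for B lin \<xi> Q \<longleftrightarrow> Q \<in> carrier_mat (card B) (card B) \<and>
     (\<forall>i<card B. \<forall>j<card B.
        (ord_elem B lin i = \<xi> (ord_elem B lin j) \<longrightarrow> Q $$ (i,j) = 1 \<or> Q $$ (i,j) = -1) \<and>
        (ord_elem B lin i \<noteq> \<xi> (ord_elem B lin j) \<longrightarrow> Q $$ (i,j) = 0))"

end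

theory Submission imports Defs "Jordan_Normal_Form.Determinant" begin

lemma mult_entry:
  assumes "A \<in> carrier_mat n n" "B \<in> carrier_mat n n" "i < n" "j < n"
  shows "(A * B) $$ (i,j) = (\<Sum>k\<in>{0..<n}. A $$ (i,k) * B $$ (k,j))"
  using assms by (simp add: scalar_prod_def)

lemma orth_tri_id:
  fixes V R T :: "real mat"
  assumes V: "V \<in> carrier_mat n n" and R: "R \<in> carrier_mat n n" and T: "T \<in> carrier_mat n n"
    and orth: "transpose_mat V * V = 1\<^sub>m n" and VR: "V * R = T"
    and uR: "upper_triangular R" and pR: "\<forall>i<n. R $$ (i,i) > 0"
    and uT: "upper_triangular T" and dT: "\<forall>i<n. T $$ (i,i) = 1"
  shows "V = 1\<^sub>m n"
proof -
  have Rz: "R $$ (k,j) = 0" if "j < k" "k < n" for k j using uR R that by (auto simp: upper_triangular_def)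
  have Tz: "T $$ (k,j) = 0" if "j < k" "k < n" for k j using uT T that by (auto simp: upper_triangular_def)
  have VRe: "T $$ (i,j) = (\<Sum>k\<in>{0..<n}. V $$ (i,k) * R $$ (k,j))" if "i<n" "j<n" for i j
    using mult_entry[OF V R that] VR by simp
  have Oe: "(\<Sum>k\<in>{0..<n}. V $$ (k,i) * V $$ (k,j)) = (if i = j then 1 else 0)" if "i<n" "j<n" for i j
  proof -
    have "(transpose_mat V * V) $$ (i,j) = (\<Sum>k\<in>{0..<n}. transpose_mat V $$ (i,k) * V $$ (k,j))"
      using mult_entry[of "transpose_mat V" n V i j] V that by simp
    also have "\<dots> = (\<Sum>k\<in>{0..<n}. V $$ (k,i) * V $$ (k,j))" using V that by (intro sum.cong) auto
    finally show ?thesis using orth that by simp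
  qed
  have main: "\<forall>i<n. V $$ (i,j) = (if i = j then 1 else 0)" if "j < n" for j
    using that
  proof (induction j rule: less_induct)
    case (less j)
    have IH: "V $$ (i,k) = (if i = k then 1 else 0)" if "k < j" "i < n" for i k
      using less.IH[of k] that less.prems by auto
    have col: "T $$ (i,j) = V $$ (i,j) * R $$ (j,j) + (if i < j then R $$ (i,j) else 0)" if "i < n" for i
    proof -
      have "(\<Sum>k\<in>{0..<n}. V $$ (i,k) * R $$ (k,j)) =
            (\<Sum>k\<in>{0..<n}. (if k = j then V $$ (i,j) * R $$ (j,j) else 0) + (if k = i \<and> i < j then R $$ (i,j) else 0))"
      proof (intro sum.cong refl)
        fix k assume k: "k \<in> {0..<n}"
        show "V $$ (i,k) * R $$ (k,j) = (if k = j then V $$ (i,j) * R $$ (j,j) else 0) + (if k = i \<and> i < j then R $$ (i,j) else 0)"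
        proof (cases "k < j")
          case True then show ?thesis using IH[of k i] \<open>i<n\<close> by auto
        next
          case False
          then show ?thesis using Rz[of j k] k by (cases "k = j") auto
        qed
      qed
      also have "\<dots> = V $$ (i,j) * R $$ (j,j) + (if i < j then R $$ (i,j) else 0)"
        using less.prems that by (simp add: sum.distrib)
      finally show ?thesis using VRe[OF that less.prems] by simp
    qed
    have low: "V $$ (i,j) = 0" if "i < n" "i \<noteq> j" for i
    proof (cases "i < j")
      case True
      have "(\<Sum>k\<in>{0..<n}. V $$ (k,i) * V $$ (k,j)) = (\<Sum>k\<in>{0..<n}. if k = i then V $$ (i,j) else 0)"
        using IH True by (intro sum.cong) auto
      then show ?thesis using Oe[OF that(1) less.prems] that by simp
    next
      case False
      then have "j < i" using that by auto
      have "T $$ (i,j) = 0" using Tz \<open>j<i\<close> that by auto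
      then show ?thesis using col[OF that(1)] False pR less.prems by auto
    qed
    have d1: "V $$ (j,j) * R $$ (j,j) = 1" using col[OF less.prems] dT less.prems by auto
    have "(\<Sum>k\<in>{0..<n}. V $$ (k,j) * V $$ (k,j)) = (\<Sum>k\<in>{0..<n}. if k = j then V $$ (j,j) * V $$ (j,j) else 0)"
      using low by (intro sum.cong) auto
    then have "V $$ (j,j) * V $$ (j,j) = 1" using Oe[OF less.prems less.prems] less.prems by simp
    moreover have "V $$ (j,j) > 0" using d1 pR less.prems
      by (smt (verit) mult_nonpos_nonneg)
    ultimately have "V $$ (j,j) = 1"
    proof -
      assume a: "V $$ (j,j) * V $$ (j,j) = 1" "V $$ (j,j) > 0"
      have "(V $$ (j,j) - 1) * (V $$ (j,j) + 1) = 0" using a(1) by (simp add: algebra_simps)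
      then show ?thesis using a(2) by auto
    qed
    then show ?case using low by auto
  qed
  show ?thesis using V main by (intro eq_matI) auto
qed

lemma qr_char:
  fixes Q R P T :: "real mat"
  assumes Q: "Q \<in> carrier_mat n n" and R: "R \<in> carrier_mat n n"
    and P: "P \<in> carrier_mat n n" and T: "T \<in> carrier_mat n n"
    and oQ: "transpose_mat Q * Q = 1\<^sub>m n" and oP: "transpose_mat P * P = 1\<^sub>m n"
    and uR: "upper_triangular R" and pR: "\<forall>i<n. R $$ (i,i) > 0"
    and uT: "upper_triangular T" and dT: "\<forall>i<n. T $$ (i,i) = 1"
    and eq: "Q * R = P * T"
  shows "Q = P \<and> R = T"
proof -
  have Pt: "transpose_mat P \<in> carrier_mat n n" using P by simp
  have Qt: "transpose_mat Q \<in> carrier_mat n n" using Q by simp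
  have PPt: "P * transpose_mat P = 1\<^sub>m n" using mat_mult_left_right_inverse[OF Pt P oP] .
  define V where "V = transpose_mat P * Q"
  have V: "V \<in> carrier_mat n n" unfolding V_def using Pt Q by (rule mult_carrier_mat)
  have tV: "transpose_mat V = transpose_mat Q * P"
    unfolding V_def transpose_mult[OF Pt Q] transpose_transpose ..
  have "transpose_mat V * V = (transpose_mat Q * P) * (transpose_mat P * Q)"
    by (subst tV) (simp only: V_def)
  also have "\<dots> = transpose_mat Q * (P * (transpose_mat P * Q))"
    by (rule assoc_mult_mat[OF Qt P mult_carrier_mat[OF Pt Q]])
  also have "P * (transpose_mat P * Q) = (P * transpose_mat P) * Q"
    by (rule assoc_mult_mat[OF P Pt Q, symmetric])
  also have "\<dots> = Q" unfolding PPt using Q by (rule left_mult_one_mat)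
  finally have oV: "transpose_mat V * V = 1\<^sub>m n" using oQ by simp
  have "V * R = transpose_mat P * (Q * R)" unfolding V_def by (rule assoc_mult_mat[OF Pt Q R])
  also have "\<dots> = transpose_mat P * (P * T)" unfolding eq ..
  also have "\<dots> = (transpose_mat P * P) * T" by (rule assoc_mult_mat[OF Pt P T, symmetric])
  also have "\<dots> = T" unfolding oP using T by (rule left_mult_one_mat)
  finally have VR: "V * R = T" .
  have V1: "V = 1\<^sub>m n" using orth_tri_id[OF V R T oV VR uR pR uT dT] .
  have "Q = (P * transpose_mat P) * Q" unfolding PPt using Q by (rule left_mult_one_mat[symmetric])
  also have "\<dots> = P * V" unfolding V_def by (rule assoc_mult_mat[OF P Pt Q])
  also have "\<dots> = P" unfolding V1 using P by (rule right_mult_one_mat)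
  finally have QP: "Q = P" .
  have "R = (transpose_mat P * P) * R" unfolding oP using R by (rule left_mult_one_mat[symmetric])
  also have "\<dots> = transpose_mat P * (P * R)" by (rule assoc_mult_mat[OF Pt P R])
  also have "\<dots> = transpose_mat P * (P * T)" using eq QP by simp
  also have "\<dots> = (transpose_mat P * P) * T" by (rule assoc_mult_mat[OF Pt P T, symmetric])
  also have "\<dots> = T" unfolding oP using T by (rule left_mult_one_mat)
  finally show ?thesis using QP by simp
qed

lemma ord_elem_props:
  assumes fin: "finite B" and tot: "total_order_on B lin"
  shows "\<And>i. i < card B \<Longrightarrow> ord_elem B lin i \<in> B"
    and "bij_betw (ord_elem B lin) {..<card B} B"
    and "\<And>i j. i < card B \<Longrightarrow> j < card B \<Longrightarrow> lin (ord_elem B lin i) (ord_elem B lin j) \<longleftrightarrow> i \<le> j"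
proof -
  define rk where "rk x = card {y\<in>B. lin y x \<and> y \<noteq> x}" for x
  have refl: "\<And>x. x \<in> B \<Longrightarrow> lin x x" and trans: "\<And>x y z. x\<in>B \<Longrightarrow> y\<in>B \<Longrightarrow> z\<in>B \<Longrightarrow> lin x y \<Longrightarrow> lin y z \<Longrightarrow> lin x z"
    and anti: "\<And>x y. x\<in>B \<Longrightarrow> y\<in>B \<Longrightarrow> lin x y \<Longrightarrow> lin y x \<Longrightarrow> x = y"
    and total: "\<And>x y. x\<in>B \<Longrightarrow> y\<in>B \<Longrightarrow> lin x y \<or> lin y x"
    using tot unfolding total_order_on_def preorder_on_def by blast+
  have mono: "rk x < rk y" if "x \<in> B" "y \<in> B" "lin x y" "x \<noteq> y" for x y
  proof -
    have "{z\<in>B. lin z x \<and> z \<noteq> x} \<subset> {z\<in>B. lin z y \<and> z \<noteq> y}"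
    proof
      show "{z\<in>B. lin z x \<and> z \<noteq> x} \<subseteq> {z\<in>B. lin z y \<and> z \<noteq> y}"
      proof
        fix z assume z: "z \<in> {z\<in>B. lin z x \<and> z \<noteq> x}"
        have "lin z y" using trans[of z x y] z that by auto
        moreover have "z \<noteq> y" using anti[of x y] z that by auto
        ultimately show "z \<in> {z\<in>B. lin z y \<and> z \<noteq> y}" using z by auto
      qed
      show "{z\<in>B. lin z x \<and> z \<noteq> x} \<noteq> {z\<in>B. lin z y \<and> z \<noteq> y}"
        using that by blast
    qed
    then show ?thesis unfolding rk_def using fin by (intro psubset_card_mono) auto
  qed
  have inj: "inj_on rk B"
  proof (rule inj_onI)
    fix x y assume "x \<in> B" "y \<in> B" "rk x = rk y"
    then show "x = y" using mono[of x y] mono[of y x] total[of x y] by (metis less_irrefl)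
  qed
  have sub: "rk ` B \<subseteq> {..<card B}"
  proof
    fix r assume "r \<in> rk ` B"
    then obtain x where x: "x \<in> B" "r = rk x" by auto
    have "{y\<in>B. lin y x \<and> y \<noteq> x} \<subset> B" using x by auto
    then show "r \<in> {..<card B}" using x fin unfolding rk_def by (auto intro: psubset_card_mono)
  qed
  have img: "rk ` B = {..<card B}"
    using sub by (intro card_subset_eq) (auto simp: card_image[OF inj])
  have bij: "bij_betw rk B {..<card B}" using inj img by (simp add: bij_betw_def)
  have oe: "ord_elem B lin i \<in> B \<and> rk (ord_elem B lin i) = i" if "i < card B" for i
  proof -
    have "i \<in> rk ` B" using img that by simp
    then obtain x where x: "x \<in> B" "rk x = i" by force
    have "ord_elem B lin i = x" unfolding ord_elem_def
    proof (rule the_equality)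
      show "x \<in> B \<and> card {y\<in>B. lin y x \<and> y \<noteq> x} = i" using x by (simp add: rk_def)
      fix z assume z: "z \<in> B \<and> card {y\<in>B. lin y z \<and> y \<noteq> z} = i"
      then have "rk z = rk x" using x by (simp add: rk_def)
      then show "z = x" using inj_onD[OF inj] z x by blast
    qed
    then show ?thesis using x by simp
  qed
  show mem: "\<And>i. i < card B \<Longrightarrow> ord_elem B lin i \<in> B" using oe by blast
  have injo: "inj_on (ord_elem B lin) {..<card B}"
  proof (rule inj_onI)
    fix i j assume ij: "i \<in> {..<card B}" "j \<in> {..<card B}" "ord_elem B lin i = ord_elem B lin j"
    then have "rk (ord_elem B lin i) = rk (ord_elem B lin j)" by simp
    moreover have "rk (ord_elem B lin i) = i" using oe[of i] ij(1) by simp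
    moreover have "rk (ord_elem B lin j) = j" using oe[of j] ij(2) by simp
    ultimately show "i = j" by simp
  qed
  show "bij_betw (ord_elem B lin) {..<card B} B"
    unfolding bij_betw_def
  proof
    show "inj_on (ord_elem B lin) {..<card B}" by (rule injo)
    have "ord_elem B lin ` {..<card B} \<subseteq> B" using mem by auto
    moreover have "card (ord_elem B lin ` {..<card B}) = card B" using card_image[OF injo] by simp
    ultimately show "ord_elem B lin ` {..<card B} = B" using fin by (intro card_subset_eq) auto
  qed
  show "lin (ord_elem B lin i) (ord_elem B lin j) \<longleftrightarrow> i \<le> j" if "i < card B" "j < card B" for i j
  proof
    assume l: "lin (ord_elem B lin i) (ord_elem B lin j)"
    show "i \<le> j"
    proof (cases "ord_elem B lin i = ord_elem B lin j")
      case True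
      then have "rk (ord_elem B lin i) = rk (ord_elem B lin j)" by simp
      moreover have "rk (ord_elem B lin i) = i" using oe[of i] that(1) by simp
      moreover have "rk (ord_elem B lin j) = j" using oe[of j] that(2) by simp
      ultimately show ?thesis by simp
    next
      case False
      have "rk (ord_elem B lin i) < rk (ord_elem B lin j)" using mono[OF conjunct1[OF oe[OF that(1)]] conjunct1[OF oe[OF that(2)]] l False] .
      moreover have "rk (ord_elem B lin i) = i" using oe[of i] that(1) by simp
      moreover have "rk (ord_elem B lin j) = j" using oe[of j] that(2) by simp
      ultimately show ?thesis by simp
    qed
  next
    assume "i \<le> j"
    show "lin (ord_elem B lin i) (ord_elem B lin j)"
    proof (rule ccontr)
      assume n: "\<not> ?thesis"
      then have l: "lin (ord_elem B lin j) (ord_elem B lin i)" using total[of "ord_elem B lin j" "ord_elem B lin i"] oe[of i] oe[of j] that by blast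
      have ne: "ord_elem B lin j \<noteq> ord_elem B lin i" using n refl[of "ord_elem B lin i"] oe[of i] that by auto
      have "rk (ord_elem B lin j) < rk (ord_elem B lin i)" using mono[OF conjunct1[OF oe[OF that(2)]] conjunct1[OF oe[OF that(1)]] l ne] .
      moreover have "rk (ord_elem B lin i) = i" using oe[of i] that(1) by simp
      moreover have "rk (ord_elem B lin j) = j" using oe[of j] that(2) by simp
      ultimately show False using \<open>i \<le> j\<close> by simp
    qed
  qed
qed


theorem lemmaA2:
  fixes scale :: "complex \<Rightarrow> 'u::ab_group_add \<Rightarrow> 'u"
    and B :: "'u set" and w :: "'u \<Rightarrow> 'u" and \<xi> :: "'u \<Rightarrow> 'u"
    and leq lin :: "'u \<Rightarrow> 'u \<Rightarrow> bool"
  assumes "Vector_Spaces.finite_dimensional_vector_space scale B"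
    and "Vector_Spaces.linear scale scale w"
    and "bij_betw \<xi> B B"
    and "preorder_on B leq"
    and "acts_up_to_lower scale B leq w \<xi>"
    and "linearisation_of B leq lin"
  shows "(\<exists>!QR. is_QR (matrix_wrt scale B lin w) (fst QR) (snd QR)) \<and>
         (\<forall>Q R. is_QR (matrix_wrt scale B lin w) Q R \<longrightarrow> gen_perm_for B lin \<xi> Q)"
proof -
  interpret fd: finite_dimensional_vector_space scale B by (rule assms(1))
  have fin: "finite B" by (rule fd.finite_Basis)
  have indep: "fd.independent B" by (rule fd.independent_Basis)
  have spn: "\<And>v. v \<in> fd.span B" using fd.span_Basis by simp
  have tot: "total_order_on B lin" and lstrict: "\<And>x y. x\<in>B \<Longrightarrow> y\<in>B \<Longrightarrow> strict_of leq x y \<Longrightarrow> lin x y \<and> x \<noteq> y"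
    using assms(6) unfolding linearisation_of_def by auto
  obtain \<sigma> :: "'u \<Rightarrow> int" where s1: "\<forall>x\<in>B. \<sigma> x = 1 \<or> \<sigma> x = -1"
    and ex: "\<forall>x\<in>B. \<exists>a :: 'u \<Rightarrow> int. w x = scale (of_int (\<sigma> x)) (\<xi> x) +
                 (\<Sum>y\<in>{y\<in>B. strict_of leq y x}. scale (of_int (a y)) (\<xi> y))"
    using assms(5) unfolding acts_up_to_lower_def by blast
  from bchoice[OF ex] obtain a :: "'u \<Rightarrow> 'u \<Rightarrow> int" where ha: "\<forall>x\<in>B. w x = scale (of_int (\<sigma> x)) (\<xi> x) +
                 (\<Sum>y\<in>{y\<in>B. strict_of leq y x}. scale (of_int (a x y)) (\<xi> y))" by blast
  have ss: "\<sigma> x * \<sigma> x = 1" if "x \<in> B" for x using s1 that by auto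
  have \<xi>B: "\<xi> x \<in> B" if "x \<in> B" for x using assms(3) that by (auto simp: bij_betw_def)
  have \<xi>inj: "inj_on \<xi> B" using assms(3) by (auto simp: bij_betw_def)
  define g where "g = the_inv_into B \<xi>"
  have gB: "g z \<in> B" and \<xi>g: "\<xi> (g z) = z" if "z \<in> B" for z
    using the_inv_into_into[OF \<xi>inj, of z B] f_the_inv_into_f_bij_betw[OF assms(3) that] that assms(3)
    by (auto simp: g_def bij_betw_def)
  have \<xi>eq: "z = \<xi> y \<longleftrightarrow> y = g z" if "z \<in> B" "y \<in> B" for z y
    using gB[OF that(1)] \<xi>g[OF that(1)] that \<xi>inj by (metis inj_onD)
  define S where "S x = {y\<in>B. strict_of leq y x}" for x
  have rep: "fd.representation B (w x) z = of_int (\<sigma> x) * (if z = \<xi> x then 1 else 0) +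
      (\<Sum>y\<in>S x. of_int (a x y) * (if z = \<xi> y then 1 else 0))" if "x \<in> B" for x z
  proof -
    have "fd.representation B (w x) z = fd.representation B (scale (of_int (\<sigma> x)) (\<xi> x)) z +
       fd.representation B (\<Sum>y\<in>S x. scale (of_int (a x y)) (\<xi> y)) z"
      using ha that unfolding S_def by (simp add: fd.representation_add[OF indep spn spn])
    also have "fd.representation B (scale (of_int (\<sigma> x)) (\<xi> x)) z = of_int (\<sigma> x) * (if z = \<xi> x then 1 else 0)"
      using fd.representation_scale[OF indep spn] fd.representation_basis[OF indep \<xi>B[OF that]] by simp
    also have "fd.representation B (\<Sum>y\<in>S x. scale (of_int (a x y)) (\<xi> y)) z =
        (\<Sum>y\<in>S x. fd.representation B (scale (of_int (a x y)) (\<xi> y)) z)"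
      using fun_cong[OF fd.representation_sum[OF indep spn, of "\<lambda>y. scale (of_int (a x y)) (\<xi> y)" "S x"], of z] by simp
    also have "\<dots> = (\<Sum>y\<in>S x. of_int (a x y) * (if z = \<xi> y then 1 else 0))"
    proof (rule sum.cong[OF refl])
      fix y assume "y \<in> S x"
      then have "y \<in> B" by (simp add: S_def)
      then show "fd.representation B (scale (of_int (a x y)) (\<xi> y)) z = of_int (a x y) * (if z = \<xi> y then 1 else 0)"
        using fd.representation_scale[OF indep spn] fd.representation_basis[OF indep \<xi>B] by simp
    qed
    finally show ?thesis .
  qed
  have rep2: "fd.representation B (w x) z = of_int ((if g z = x then \<sigma> x else 0) +
      (if strict_of leq (g z) x then a x (g z) else 0))" if "x \<in> B" "z \<in> B" for x z
  proof -
    have "(\<Sum>y\<in>S x. (of_int (a x y) :: complex) * (if z = \<xi> y then 1 else 0)) =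
          (\<Sum>y\<in>S x. if y = g z then of_int (a x y) else 0)"
      using \<xi>eq[OF that(2)] by (intro sum.cong) (auto simp: S_def)
    also have "\<dots> = (if g z \<in> S x then of_int (a x (g z)) else 0)"
      using fin by (simp add: S_def)
    finally show ?thesis using rep[OF that(1), of z] \<xi>eq[OF that(2) that(1)] gB[OF that(2)]
      by (auto simp: S_def)
  qed
  have sx: "\<not> strict_of leq x x" for x by (simp add: strict_of_def)
  define n where "n = card B"
  define e where "e = ord_elem B lin"
  have eB: "e i \<in> B" if "i < n" for i using ord_elem_props(1)[OF fin tot] that by (simp add: e_def n_def)
  have ebij: "bij_betw e {..<n} B" using ord_elem_props(2)[OF fin tot] by (simp add: e_def n_def)
  have elin: "lin (e i) (e j) \<longleftrightarrow> i \<le> j" if "i < n" "j < n" for i j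
    using ord_elem_props(3)[OF fin tot] that by (simp add: e_def n_def)
  have einj: "e i = e j \<longleftrightarrow> i = j" if "i < n" "j < n" for i j
    using ebij that by (auto simp: bij_betw_def dest: inj_onD)
  have esurj: "\<exists>k<n. e k = z" if "z \<in> B" for z
    using ebij that by (auto simp: bij_betw_def)
  define A :: "real mat" where "A = mat n n (\<lambda>(i,j). real_of_int ((if g (e i) = e j then \<sigma> (e j) else 0) +
      (if strict_of leq (g (e i)) (e j) then a (e j) (g (e i)) else 0)))"
  define P :: "real mat" where "P = mat n n (\<lambda>(i,j). if g (e i) = e j then real_of_int (\<sigma> (e j)) else 0)"
  define T :: "real mat" where "T = mat n n (\<lambda>(i,j). (if i = j then 1 else 0) +
      (if strict_of leq (e i) (e j) then real_of_int (\<sigma> (e i) * a (e j) (e i)) else 0))"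
  have Pc: "P \<in> carrier_mat n n" and Tc: "T \<in> carrier_mat n n" and Ac: "A \<in> carrier_mat n n"
    by (simp_all add: P_def T_def A_def)
  have M: "matrix_wrt scale B lin w = map_mat complex_of_real A"
  proof (rule eq_matI)
    fix i j assume ij: "i < dim_row (map_mat complex_of_real A)" "j < dim_col (map_mat complex_of_real A)"
    then have "i < n" "j < n" using Ac by auto
    then show "matrix_wrt scale B lin w $$ (i,j) = map_mat complex_of_real A $$ (i,j)"
      unfolding matrix_wrt_def using rep2[OF eB eB] Ac
      by (simp add: A_def e_def n_def[symmetric])
  qed (simp_all add: matrix_wrt_def A_def n_def)
  have PT: "P * T = A"
  proof (rule eq_matI)
    fix i j assume "i < dim_row A" "j < dim_col A"
    then have i: "i < n" and j: "j < n" using Ac by auto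
    obtain k0 where k0: "k0 < n" "e k0 = g (e i)" using esurj[OF gB[OF eB[OF i]]] by blast
    have "(P * T) $$ (i,j) = (\<Sum>k\<in>{0..<n}. P $$ (i,k) * T $$ (k,j))"
      using mult_entry[OF Pc Tc i j] .
    also have "\<dots> = (\<Sum>k\<in>{0..<n}. if k = k0 then real_of_int (\<sigma> (e k0)) * T $$ (k0,j) else 0)"
    proof (rule sum.cong[OF refl])
      fix k assume "k \<in> {0..<n}"
      then have k: "k < n" by simp
      have "g (e i) = e k \<longleftrightarrow> k = k0" using einj[OF k k0(1)] k0(2) by metis
      then show "P $$ (i,k) * T $$ (k,j) = (if k = k0 then real_of_int (\<sigma> (e k0)) * T $$ (k0,j) else 0)"
        using i k by (auto simp: P_def)
    qed
    also have "\<dots> = real_of_int (\<sigma> (e k0)) * T $$ (k0,j)" using k0 by simp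
    also have "\<dots> = A $$ (i,j)"
    proof -
      have s: "real_of_int (\<sigma> (e k0)) * real_of_int (\<sigma> (e k0) * a (e j) (e k0)) = real_of_int (a (e j) (e k0))"
        using ss[OF eB[OF k0(1)]] by (metis mult.assoc mult_1 of_int_mult)
      have Tk: "T $$ (k0,j) = (if k0 = j then 1 else 0) + (if strict_of leq (e k0) (e j) then real_of_int (\<sigma> (e k0) * a (e j) (e k0)) else 0)"
        using k0(1) j by (simp add: T_def)
      have Aij: "A $$ (i,j) = real_of_int ((if e k0 = e j then \<sigma> (e j) else 0) +
          (if strict_of leq (e k0) (e j) then a (e j) (e k0) else 0))"
        using i j by (simp add: A_def k0(2))
      show ?thesis
      proof (cases "k0 = j")
        case True
        then show ?thesis using Tk Aij sx by simp
      next
        case False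
        then have "e k0 \<noteq> e j" using einj[OF k0(1) j] by simp
        then show ?thesis using Tk Aij False s by simp
      qed
    qed
    finally show "(P * T) $$ (i,j) = A $$ (i,j)" .
  qed (use Pc Tc Ac in auto)
  have oP: "transpose_mat P * P = 1\<^sub>m n"
  proof (rule eq_matI)
    fix i j assume "i < dim_row (1\<^sub>m n)" "j < dim_col (1\<^sub>m n)"
    then have i: "i < n" and j: "j < n" by auto
    obtain ki where ki: "ki < n" "e ki = \<xi> (e i)" using esurj[OF \<xi>B[OF eB[OF i]]] by blast
    have "(transpose_mat P * P) $$ (i,j) = (\<Sum>k\<in>{0..<n}. transpose_mat P $$ (i,k) * P $$ (k,j))"
      using mult_entry[of "transpose_mat P" n P i j] Pc i j by simp
    also have "\<dots> = (\<Sum>k\<in>{0..<n}. if k = ki then real_of_int (\<sigma> (e i)) * P $$ (ki,j) else 0)"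
    proof (rule sum.cong[OF refl])
      fix k assume "k \<in> {0..<n}"
      then have k: "k < n" by simp
      have "g (e k) = e i \<longleftrightarrow> k = ki" 
      proof -
        have h1: "g (e k) = e i \<longleftrightarrow> e k = \<xi> (e i)" using \<xi>eq[OF eB[OF k] eB[OF i]] by metis
        have h2: "e k = \<xi> (e i) \<longleftrightarrow> k = ki" using einj[OF k ki(1)] ki(2) by metis
        show ?thesis using h1 h2 by blast
      qed
      then show "transpose_mat P $$ (i,k) * P $$ (k,j) = (if k = ki then real_of_int (\<sigma> (e i)) * P $$ (ki,j) else 0)"
        using i k Pc by (auto simp: P_def)
    qed
    also have "\<dots> = real_of_int (\<sigma> (e i)) * P $$ (ki,j)" using ki by simp
    also have "\<dots> = 1\<^sub>m n $$ (i,j)"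
    proof -
      have "g (e ki) = e j \<longleftrightarrow> i = j" 
      proof -
        have "g (e ki) = e i" using \<xi>eq[OF eB[OF ki(1)] eB[OF i]] ki(2) by metis
        then show ?thesis using einj[OF i j] by simp
      qed
      moreover have "real_of_int (\<sigma> (e i)) * real_of_int (\<sigma> (e i)) = 1"
        using ss[OF eB[OF i]] by (metis of_int_1 of_int_mult)
      ultimately show ?thesis using i j ki by (auto simp: P_def)
    qed
    finally show "(transpose_mat P * P) $$ (i,j) = 1\<^sub>m n $$ (i,j)" .
  qed (use Pc in auto)
  have uT: "upper_triangular T"
    unfolding upper_triangular_def
  proof (intro allI impI)
    fix i j assume "i < dim_row T" "j < i"
    then have i: "i < n" and j: "j < n" using Tc by auto
    have "\<not> strict_of leq (e i) (e j)"
    proof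
      assume "strict_of leq (e i) (e j)"
      then have "lin (e i) (e j)" using lstrict[OF eB[OF i] eB[OF j]] by blast
      then show False using elin[OF i j] \<open>j < i\<close> by simp
    qed
    then show "T $$ (i,j) = 0" using i j \<open>j < i\<close> by (simp add: T_def)
  qed
  have dT: "\<forall>i<n. T $$ (i,i) = 1" using sx by (simp add: T_def)
  have gpP: "gen_perm_for B lin \<xi> P"
    unfolding gen_perm_for_def
  proof (intro conjI allI impI)
    show "P \<in> carrier_mat (card B) (card B)" using Pc n_def by simp
  next
    fix i j assume i: "i < card B" and j: "j < card B"
    then have i': "i < n" and j': "j < n" by (simp_all add: n_def)
    have eq: "ord_elem B lin i = \<xi> (ord_elem B lin j) \<longleftrightarrow> g (e i) = e j"
      using \<xi>eq[OF eB[OF i'] eB[OF j']] unfolding e_def by metis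
    show "P $$ (i,j) = 1 \<or> P $$ (i,j) = -1" if "ord_elem B lin i = \<xi> (ord_elem B lin j)"
      using that eq i' j' s1 eB[OF j'] by (auto simp: P_def e_def)
    show "P $$ (i,j) = 0" if "ord_elem B lin i \<noteq> \<xi> (ord_elem B lin j)"
      using that eq i' j' by (auto simp: P_def e_def)
  qed
  have dimM: "dim_row (matrix_wrt scale B lin w) = n" by (simp add: matrix_wrt_def n_def)
  have QRchar: "Q = P \<and> R = T" if "is_QR (matrix_wrt scale B lin w) Q R" for Q R
  proof -
    have Q: "Q \<in> carrier_mat n n" and R: "R \<in> carrier_mat n n" and oQ: "transpose_mat Q * Q = 1\<^sub>m n"
      and uR: "upper_triangular R" and pR: "\<forall>i<n. R $$ (i,i) > 0"
      and MQ: "matrix_wrt scale B lin w = map_mat complex_of_real (Q * R)"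
      using that dimM unfolding is_QR_def Let_def by auto
    have "map_mat complex_of_real (Q * R) = map_mat complex_of_real (P * T)" using MQ M PT by simp
    then have "Q * R = P * T"
    proof -
      assume h: "map_mat complex_of_real (Q * R) = map_mat complex_of_real (P * T)"
      show ?thesis
      proof (rule eq_matI)
        fix i j assume "i < dim_row (P * T)" "j < dim_col (P * T)"
        then have ij: "i < n" "j < n" using Pc Tc by auto
        have "map_mat complex_of_real (Q * R) $$ (i,j) = map_mat complex_of_real (P * T) $$ (i,j)" using h by simp
        then show "(Q * R) $$ (i,j) = (P * T) $$ (i,j)" using ij Q R Pc Tc by simp
      qed (use Q R Pc Tc in auto)
    qed
    then show ?thesis using qr_char[OF Q R Pc Tc oQ oP uR pR uT dT] by blast
  qed
  have isPT: "is_QR (matrix_wrt scale B lin w) P T"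
    unfolding is_QR_def Let_def dimM
    using Pc Tc oP uT dT M PT by (auto simp: matrix_wrt_def n_def)
  show ?thesis
  proof
    show "\<exists>!QR. is_QR (matrix_wrt scale B lin w) (fst QR) (snd QR)"
    proof (rule ex1I[of _ "(P,T)"])
      show "is_QR (matrix_wrt scale B lin w) (fst (P,T)) (snd (P,T))" using isPT by simp
      fix QR assume "is_QR (matrix_wrt scale B lin w) (fst QR) (snd QR)"
      then show "QR = (P,T)" using QRchar[of "fst QR" "snd QR"] by (cases QR) auto
    qed
    show "\<forall>Q R. is_QR (matrix_wrt scale B lin w) Q R \<longrightarrow> gen_perm_for B lin \<xi> Q"
      using QRchar gpP by blast
  qed
qed

end
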